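(* Let $m\ge 2$ be an integer, let $z_1,z_2,\dots$ be i.i.d. standard normal random variables, let $I_1,\dots,I_m$ be positive integers, and set $N_1=I_1$, $N_i=N_{i-1}+I_i$ for $i>1$. Let $r_1,\dots,r_m>0$ and define the events $\zeta_i=\{\sum_{j=1}^{N_i} z_j^2>r_i^2\}$, $i=1,\dots,m$. For parameters $u_1^m=(u_1,\dots,u_m)$ with $0\le u_i<1/2$, define recursively $$h_1=u_1,\qquad h_i=h_{i-1}+u_i(1-2h_{i-1}),$$ $$g_1=e^{-u_1 r_m^2}(1-2u_1)^{-I_m/2},\qquad g_i=g_{i-1}\,e^{-u_i(1-2h_{i-1})r_{m-i+1}^2}\,(1-2h_i)^{-I_{m-i+1}/2},$$ so that $1-2h_i=\prod_{j\le i}(1-2u_j)$. Then $$\Pr\left(\bigcap_{i=1}^m\zeta_i\right)\le\inf_{u_1^m}\frac{g_{m-1}(u_1^m)\,\Pr\left(\chi^2_{I_1}>(1-2h_{m-1})r_1^2\right)}{(1-2h_{m-1})^{I_1/2}},$$ the infimum being over all $u_1^m$ with $0\le u_i<1/2$ for all $i$.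
   Context: For a positive integer $k$, $\chi^2_k$ denotes a random variable with the central chi-square distribution with $k$ degrees of freedom. *)

theory Defs
  imports "HOL-Probability.Probability"
begin

definition chi2_density :: "nat \<Rightarrow> real \<Rightarrow> real" where
  "chi2_density k x = (if x > 0 then
      x powr (real k / 2 - 1) * exp (- x / 2) / (2 powr (real k / 2) * Gamma (real k / 2))
    else 0)"

definition chi2_tail :: "nat \<Rightarrow> real \<Rightarrow> real" where
  "chi2_tail k c = measure (density lborel (\<lambda>x. ennreal (chi2_density k x))) {c<..}"

text \<open>h_i(u); h_0 = 0 so that h_1 = u_1.\<close>
primrec hh :: "(nat \<Rightarrow> real) \<Rightarrow> nat \<Rightarrow> real" where
  "hh u 0 = 0"
| "hh u (Suc i) = hh u i + u (Suc i) * (1 - 2 * hh u i)"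

text \<open>g_i(u); g_0 = 1 so that g_1 = exp(-u_1 r_m^2) (1-2u_1)^(-I_m/2).\<close>
primrec gg :: "nat \<Rightarrow> (nat \<Rightarrow> nat) \<Rightarrow> (nat \<Rightarrow> real) \<Rightarrow> (nat \<Rightarrow> real) \<Rightarrow> nat \<Rightarrow> real" where
  "gg m I r u 0 = 1"
| "gg m I r u (Suc i) = gg m I r u i
      * exp (- u (Suc i) * (1 - 2 * hh u i) * (r (m - i))\<^sup>2)
      * (1 - 2 * hh u (Suc i)) powr (- real (I (m - i)) / 2)"

end

theory Submission
  imports Defs
begin

lemma chi2_nonneg: "0 \<le> chi2_density k x"
  unfolding chi2_density_def
  by (cases "k = 0") (auto intro!: divide_nonneg_pos mult_pos_pos)

lemma chi2_meas[measurable]: "chi2_density k \<in> borel_measurable borel"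
  unfolding chi2_density_def by measurable

lemma chi2_nonpos: "x \<le> 0 \<Longrightarrow> chi2_density k x = 0"
  unfolding chi2_density_def by auto



lemma beta_nn:
  fixes p q :: real
  assumes "p > -1" "q > -1"
  shows "(\<integral>\<^sup>+t. ennreal ((1 - t) powr p * t powr q * indicator {0<..<1} t) \<partial>lborel)
       = ennreal (Beta (q+1) (p+1))"
proof -
  have I: "((\<lambda>t. t powr (q + 1 - 1) * (1 - t) powr (p + 1 - 1)) has_integral Beta (q+1) (p+1)) {0..1}"
    using assms by (intro has_integral_Beta_real) auto
  have "(\<integral>\<^sup>+t. ennreal (t powr (q + 1 - 1) * (1 - t) powr (p + 1 - 1)) * indicator {0..1} t \<partial>lborel)
       = ennreal (Beta (q+1) (p+1))"
    by (rule nn_integral_has_integral_lebesgue'[OF _ I]) auto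
  moreover have "(\<integral>\<^sup>+t. ennreal ((1 - t) powr p * t powr q * indicator {0<..<1} t) \<partial>lborel)
     = (\<integral>\<^sup>+t. ennreal (t powr (q + 1 - 1) * (1 - t) powr (p + 1 - 1)) * indicator {0..1} t \<partial>lborel)"
    by (intro nn_integral_cong) (auto simp: indicator_def)
  ultimately show ?thesis by simp
qed



lemma chi2_conv:
  assumes a: "a > 0" and b: "b > 0"
  shows "(\<integral>\<^sup>+y. ennreal (chi2_density a (x - y)) * ennreal (chi2_density b y) \<partial>lborel)
       = ennreal (chi2_density (a + b) x)"
proof (cases "x > 0")
  case False
  have "(\<integral>\<^sup>+y. ennreal (chi2_density a (x - y)) * ennreal (chi2_density b y) \<partial>lborel)
      = (\<integral>\<^sup>+(y::real). 0 \<partial>lborel)"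
    apply (rule nn_integral_cong) using False by (auto simp: chi2_density_def)
  then show ?thesis using False by (simp add: chi2_density_def)
next
  case True
  define p where "p = real a / 2 - 1"
  define q where "q = real b / 2 - 1"
  define Ca where "Ca = 2 powr (real a / 2) * Gamma (real a / 2)"
  define Cb where "Cb = 2 powr (real b / 2) * Gamma (real b / 2)"
  define K where "K = exp (- x / 2) / (Ca * Cb)"
  have Ca: "Ca > 0" and Cb: "Cb > 0" using a b by (auto simp: Ca_def Cb_def)
  have K: "K \<ge> 0" using Ca Cb by (simp add: K_def)
  have p: "p > -1" and q: "q > -1" using a b by (auto simp: p_def q_def)
  have Bpos: "Beta (q+1) (p+1) \<ge> 0" using p q by (simp add: Beta_def)
  have "(\<integral>\<^sup>+y. ennreal (chi2_density a (x - y)) * ennreal (chi2_density b y) \<partial>lborel)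
      = (\<integral>\<^sup>+y. ennreal K * ennreal ((x - y) powr p * y powr q * indicator {0<..<x} y) \<partial>lborel)"
  proof (intro nn_integral_cong)
    fix y :: real
    show "ennreal (chi2_density a (x - y)) * ennreal (chi2_density b y)
        = ennreal K * ennreal ((x - y) powr p * y powr q * indicator {0<..<x} y)"
    proof (cases "0 < y \<and> y < x")
      case True
      have "chi2_density a (x - y) * chi2_density b y
          = K * ((x - y) powr p * y powr q)"
      proof -
        have 1: "chi2_density a (x - y) = (x - y) powr p * exp (- (x - y) / 2) / Ca"
          using True by (simp add: chi2_density_def p_def Ca_def)
        have 2: "chi2_density b y = y powr q * exp (- y / 2) / Cb"
          using True by (simp add: chi2_density_def q_def Cb_def)
        have 3: "exp (- (x - y) / 2) * exp (- y / 2) = exp (- x / 2)"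
          by (simp add: exp_add[symmetric] field_simps)
        show ?thesis unfolding 1 2 K_def using 3[symmetric] Ca Cb
          by (simp add: field_simps)
      qed
      then show ?thesis using True K
        by (simp add: ennreal_mult[symmetric] chi2_nonneg)
    next
      case False
      then have "chi2_density a (x - y) * chi2_density b y = 0"
        by (auto simp: chi2_density_def)
      then show ?thesis using False
        by (auto simp: ennreal_mult[symmetric] chi2_nonneg indicator_def)
    qed
  qed
  also have "\<dots> = ennreal K * (\<integral>\<^sup>+y. ennreal ((x - y) powr p * y powr q * indicator {0<..<x} y) \<partial>lborel)"
    by (rule nn_integral_cmult) measurable
  also have "(\<integral>\<^sup>+y. ennreal ((x - y) powr p * y powr q * indicator {0<..<x} y) \<partial>lborel)
      = ennreal x * (\<integral>\<^sup>+t. ennreal ((x - (0 + x * t)) powr p * (0 + x * t) powr q * indicator {0<..<x} (0 + x * t)) \<partial>lborel)"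
    using True by (subst nn_integral_real_affine[where c=x and t=0]) auto
  also have "(\<integral>\<^sup>+t. ennreal ((x - (0 + x * t)) powr p * (0 + x * t) powr q * indicator {0<..<x} (0 + x * t)) \<partial>lborel)
      = (\<integral>\<^sup>+t. ennreal (x powr (p + q)) * ennreal ((1 - t) powr p * t powr q * indicator {0<..<1} t) \<partial>lborel)"
  proof (intro nn_integral_cong)
    fix t :: real
    show "ennreal ((x - (0 + x * t)) powr p * (0 + x * t) powr q * indicator {0<..<x} (0 + x * t))
        = ennreal (x powr (p + q)) * ennreal ((1 - t) powr p * t powr q * indicator {0<..<1} t)"
    proof (cases "0 < t \<and> t < 1")
      case tt: True
      have "x - x * t = x * (1 - t)" by (simp add: algebra_simps)
      then have "(x - (0 + x * t)) powr p * (0 + x * t) powr q = x powr (p + q) * ((1 - t) powr p * t powr q)"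
        using tt True by (simp add: powr_mult powr_add)
      moreover have "0 < x * t \<and> x * t < x" using tt True by (simp add: mult_less_cancel_left1)
      ultimately show ?thesis using tt
        by (simp add: ennreal_mult[symmetric])
    next
      case False
      then have "\<not> (0 < x * t \<and> x * t < x)" using \<open>x > 0\<close>
        by (auto simp: zero_less_mult_iff mult_less_cancel_left1)
      then have "indicator {0<..<x} (0 + x * t) = (0::real)" "indicator {0<..<1} t = (0::real)"
        using False by (auto simp: indicator_def)
      then show ?thesis by simp
    qed
  qed
  also have "\<dots> = ennreal (x powr (p + q)) * ennreal (Beta (q+1) (p+1))"
    by (subst nn_integral_cmult) (auto simp: beta_nn p q)
  finally have "(\<integral>\<^sup>+y. ennreal (chi2_density a (x - y)) * ennreal (chi2_density b y) \<partial>lborel)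
     = ennreal (K * (x * (x powr (p + q) * Beta (q+1) (p+1))))"
    using K True Bpos by (simp add: ennreal_mult)
  also have "K * (x * (x powr (p + q) * Beta (q+1) (p+1))) = chi2_density (a + b) x"
  proof -
    define X where "X = x powr (real (a + b) / 2 - 1)"
    define Ga where "Ga = Gamma (real a / 2)"
    define Gb where "Gb = Gamma (real b / 2)"
    define G where "G = Gamma (real (a + b) / 2)"
    have e1: "x * (x powr (p + q) * Beta (q+1) (p+1)) = X * (Gb * Ga / G)"
    proof -
      have "x * x powr (p + q) = X"
        using True by (simp add: X_def p_def q_def powr_add[symmetric] algebra_simps powr_mult_base add_divide_distrib)
      moreover have "Beta (q+1) (p+1) = Gb * Ga / G"
        by (simp add: Beta_def p_def q_def Ga_def Gb_def G_def add_divide_distrib add.commute)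
      ultimately show ?thesis by (simp only: mult.assoc[symmetric])
    qed
    have e2: "Ca * Cb = 2 powr (real (a + b) / 2) * (Ga * Gb)"
      by (simp add: Ca_def Cb_def Ga_def Gb_def add_divide_distrib powr_add)
    have e3: "chi2_density (a + b) x = X * exp (- x / 2) / (2 powr (real (a + b) / 2) * G)"
      using True by (simp add: chi2_density_def X_def G_def)
    have pos: "Ga > 0" "Gb > 0" "G > 0" using a b by (auto simp: Ga_def Gb_def G_def)
    show ?thesis unfolding e1 e3 K_def e2 using pos by (simp add: divide_simps)
  qed
  finally show ?thesis .
qed




lemma pw: "(x::real) > 0 \<Longrightarrow> (x\<^sup>2) powr (- (1/2)) = inverse x"
proof -
  assume x: "x > 0"
  have "(x\<^sup>2) powr (- (1/2)) = inverse ((x\<^sup>2) powr (1/2))" by (rule powr_minus)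
  also have "(x\<^sup>2) powr (1/2) = sqrt (x\<^sup>2)" by (rule powr_half_sqrt) (rule zero_le_power2)
  also have "sqrt (x\<^sup>2) = x" using x by (simp only: real_sqrt_abs abs_of_pos)
  finally show ?thesis .
qed

lemma g1: "2 powr (1 / 2) * Gamma (1 / 2) = sqrt (2 * pi)"
proof -
  have "2 powr (1/2) = sqrt (2::real)" by (rule powr_half_sqrt) simp
  then show ?thesis by (simp only: Gamma_one_half_real real_sqrt_mult)
qed

lemma chi2_one_sq:
  assumes x: "x > 0"
  shows "chi2_density 1 (x\<^sup>2) * (2 * x) = 2 * std_normal_density x"
proof -
  have e: "real (1::nat) / 2 - 1 = - (1/2 :: real)" "real (1::nat) / 2 = (1/2::real)" "1/2 - 1 = - (1/2::real)" by simp_all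
  have x2: "x\<^sup>2 > 0" using x by simp
  have c: "chi2_density 1 (x\<^sup>2) = inverse x * exp (- (x\<^sup>2) / 2) / sqrt (2 * pi)"
    unfolding chi2_density_def e g1 if_P[OF x2] pw[OF x] ..
  have "inverse x * exp (- (x\<^sup>2) / 2) / sqrt (2 * pi) * (2 * x) = 2 * ((1 / sqrt (2 * pi)) * exp (- (x\<^sup>2) / 2))"
    using x by (simp add: field_simps)
  then show ?thesis unfolding c std_normal_density_def .
qed


lemma normal_sym_int:
  assumes "s \<ge> 0"
  shows "(\<integral>\<^sup>+x. ennreal (std_normal_density x) * indicator {-s..s} x \<partial>lborel)
       = (\<integral>\<^sup>+x. ennreal (2 * std_normal_density x) * indicator {0..s} x \<partial>lborel)"
proof -
  have "(\<integral>\<^sup>+x. ennreal (std_normal_density x) * indicator {-s..s} x \<partial>lborel)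
      = (\<integral>\<^sup>+x. ennreal (std_normal_density x) * indicator {-s..0} x
            + ennreal (std_normal_density x) * indicator {0..s} x \<partial>lborel)"
    apply (rule nn_integral_cong_AE)
    using AE_lborel_singleton[of 0]
    by eventually_elim (auto simp: indicator_def)
  also have "\<dots> = (\<integral>\<^sup>+x. ennreal (std_normal_density x) * indicator {-s..0} x \<partial>lborel)
            + (\<integral>\<^sup>+x. ennreal (std_normal_density x) * indicator {0..s} x \<partial>lborel)"
    by (rule nn_integral_add) auto
  also have "(\<integral>\<^sup>+x. ennreal (std_normal_density x) * indicator {-s..0} x \<partial>lborel)
      = (\<integral>\<^sup>+x. ennreal (std_normal_density x) * indicator {0..s} x \<partial>lborel)"
  proof -
    have "(\<integral>\<^sup>+x. ennreal (std_normal_density x) * indicator {-s..0} x \<partial>lborel)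
        = ennreal \<bar>- 1\<bar> * (\<integral>\<^sup>+x. ennreal (std_normal_density (0 + (-1) * x)) * indicator {-s..0} (0 + (-1) * x) \<partial>lborel)"
      by (rule nn_integral_real_affine) auto
    also have "\<dots> = (\<integral>\<^sup>+x. ennreal (std_normal_density x) * indicator {0..s} x \<partial>lborel)"
      by (auto intro!: nn_integral_cong simp: std_normal_density_def indicator_def)
    finally show ?thesis .
  qed
  also have "(\<integral>\<^sup>+x. ennreal (std_normal_density x) * indicator {0..s} x \<partial>lborel)
         + (\<integral>\<^sup>+x. ennreal (std_normal_density x) * indicator {0..s} x \<partial>lborel)
      = (\<integral>\<^sup>+x. ennreal (std_normal_density x) * indicator {0..s} x
            + ennreal (std_normal_density x) * indicator {0..s} x \<partial>lborel)"
    by (rule nn_integral_add[symmetric]) auto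
  also have "\<dots> = (\<integral>\<^sup>+x. ennreal (2 * std_normal_density x) * indicator {0..s} x \<partial>lborel)"
    proof (intro nn_integral_cong)
    fix x :: real
    have "ennreal (2 * std_normal_density x) = ennreal (std_normal_density x) + ennreal (std_normal_density x)"
      by (subst mult_2) (rule ennreal_plus; simp)
    then show "ennreal (std_normal_density x) * indicator {0..s} x + ennreal (std_normal_density x) * indicator {0..s} x
      = ennreal (2 * std_normal_density x) * indicator {0..s} x"
      by (simp only: distrib_right)
  qed
  finally show ?thesis .
qed


lemma chi2_one_sq': "x > 0 \<Longrightarrow> chi2_density (Suc 0) (x\<^sup>2) * (2 * x) = 2 * std_normal_density x"
  using chi2_one_sq[of x] by simp

lemma chi2_one_int:
  assumes "s > 0"
  shows "(\<integral>\<^sup>+x. ennreal (chi2_density 1 x) * indicator {..s\<^sup>2} x \<partial>lborel)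
       = (\<integral>\<^sup>+x. ennreal (2 * std_normal_density x) * indicator {0..s} x \<partial>lborel)"
proof -
  have "(\<integral>\<^sup>+x. ennreal (chi2_density 1 x) * indicator {..s\<^sup>2} x \<partial>lborel)
      = (\<integral>\<^sup>+x. ennreal (chi2_density 1 x * indicator {(\<lambda>y. y\<^sup>2) 0..(\<lambda>y. y\<^sup>2) s} x) \<partial>lborel)"
    by (intro nn_integral_cong) (auto simp: indicator_def chi2_nonpos)
  also have "\<dots> = (\<integral>\<^sup>+x. ennreal (chi2_density 1 ((\<lambda>y. y\<^sup>2) x) * (2 * x) * indicator {0..s} x) \<partial>lborel)"
    apply (rule nn_integral_substitution[where g' = "\<lambda>x. 2 * x"])
    using assms
    by (auto simp: set_borel_measurable_def intro!: derivative_eq_intros continuous_intros)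
  also have "\<dots> = (\<integral>\<^sup>+x. ennreal (2 * std_normal_density x) * indicator {0..s} x \<partial>lborel)"
    apply (rule nn_integral_cong_AE)
    using AE_lborel_singleton[of 0]
    by eventually_elim (auto simp: indicator_def chi2_one_sq')
  finally show ?thesis .
qed




context prob_space
begin

lemma chi2_sq_eq:
  assumes X: "distributed M lborel X (\<lambda>x. ennreal (std_normal_density x))"
  shows "(\<integral>\<^sup>+x. ennreal (chi2_density 1 x) * indicator {..a} x \<partial>lborel)
       = emeasure M {\<omega> \<in> space M. (X \<omega>)\<^sup>2 \<le> a}"
proof (cases "a > 0")
  case True
  define s where "s = sqrt a"
  have s: "s > 0" "a = s\<^sup>2" using True by (auto simp: s_def)
  have "{\<omega> \<in> space M. (X \<omega>)\<^sup>2 \<le> a} = X -` {-s..s} \<inter> space M"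
    using s by (auto simp: power2_le_iff_abs_le abs_le_iff)
  then have "emeasure M {\<omega> \<in> space M. (X \<omega>)\<^sup>2 \<le> a}
      = (\<integral>\<^sup>+x. ennreal (std_normal_density x) * indicator {-s..s} x \<partial>lborel)"
    using distributed_emeasure[OF X, of "{-s..s}"] by simp
  also have "\<dots> = (\<integral>\<^sup>+x. ennreal (2 * std_normal_density x) * indicator {0..s} x \<partial>lborel)"
    using s by (intro normal_sym_int) simp
  also have "\<dots> = (\<integral>\<^sup>+x. ennreal (chi2_density 1 x) * indicator {..a} x \<partial>lborel)"
    using chi2_one_int[OF s(1)] s(2) by simp
  finally show ?thesis by simp
next
  case False
  have "(\<integral>\<^sup>+x. ennreal (chi2_density 1 x) * indicator {..a} x \<partial>lborel) = (\<integral>\<^sup>+(x::real). 0 \<partial>lborel)"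
  proof (rule nn_integral_cong)
    fix x :: real
    show "ennreal (chi2_density 1 x) * indicator {..a} x = 0"
    proof (cases "x \<le> a")
      case True
      then have "x \<le> 0" using False by linarith
      then show ?thesis by (simp add: chi2_nonpos)
    qed (simp add: indicator_def)
  qed
  moreover have "emeasure M {\<omega> \<in> space M. (X \<omega>)\<^sup>2 \<le> a} = 0"
  proof -
    have Xm[measurable]: "X \<in> borel_measurable M"
      using distributed_measurable[OF X] by simp
    have "emeasure M {\<omega> \<in> space M. (X \<omega>)\<^sup>2 \<le> a} \<le> emeasure M (X -` {0} \<inter> space M)"
    proof (rule emeasure_mono)
      show "{\<omega> \<in> space M. (X \<omega>)\<^sup>2 \<le> a} \<subseteq> X -` {0} \<inter> space M"
      proof
        fix \<omega> assume w: "\<omega> \<in> {\<omega> \<in> space M. (X \<omega>)\<^sup>2 \<le> a}"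
        then have "(X \<omega>)\<^sup>2 \<le> a" by simp
        then have "(X \<omega>)\<^sup>2 \<le> 0" using False by linarith
        then have "X \<omega> = 0" by (simp only: power2_less_eq_zero_iff)
        then show "\<omega> \<in> X -` {0} \<inter> space M" using w by simp
      qed
      show "X -` {0} \<inter> space M \<in> sets M" by (rule measurable_sets[OF Xm]) simp
    qed
    also have "\<dots> = (\<integral>\<^sup>+x. ennreal (std_normal_density x) * indicator {0} x \<partial>lborel)"
      using distributed_emeasure[OF X, of "{0}"] by simp
    also have "\<dots> = (\<integral>\<^sup>+(x::real). 0 \<partial>lborel)"
      apply (rule nn_integral_cong_AE)
      using AE_lborel_singleton[of 0] by eventually_elim (simp add: indicator_def)
    finally show ?thesis by simp
  qed
  ultimately show ?thesis by simp
qed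

lemma chi2_sq_distributed:
  assumes X: "distributed M lborel X (\<lambda>x. ennreal (std_normal_density x))"
  shows "distributed M lborel (\<lambda>\<omega>. (X \<omega>)\<^sup>2) (\<lambda>x. ennreal (chi2_density 1 x))"
proof (rule distributedI_borel_atMost[where g = "\<lambda>a. measure M {\<omega> \<in> space M. (X \<omega>)\<^sup>2 \<le> a}"])
  have Xm[measurable]: "X \<in> borel_measurable M"
    using distributed_measurable[OF X] by simp
  show "(\<lambda>\<omega>. (X \<omega>)\<^sup>2) \<in> borel_measurable M" by measurable
  show "chi2_density 1 \<in> borel_measurable borel" by simp
  show "AE x in lborel. 0 \<le> chi2_density 1 x" by (simp add: chi2_nonneg)
  show "(\<integral>\<^sup>+x. ennreal (chi2_density 1 x * indicator {..a} x) \<partial>lborel) = ennreal (measure M {\<omega> \<in> space M. (X \<omega>)\<^sup>2 \<le> a})" for a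
  proof -
    have "(\<integral>\<^sup>+x. ennreal (chi2_density 1 x * indicator {..a} x) \<partial>lborel) = (\<integral>\<^sup>+x. ennreal (chi2_density 1 x) * indicator {..a} x \<partial>lborel)"
      by (intro nn_integral_cong) (simp add: indicator_def)
    then show ?thesis using chi2_sq_eq[OF X, of a] by (simp add: emeasure_eq_measure)
  qed
  show "emeasure M {x \<in> space M. (X x)\<^sup>2 \<le> a} = ennreal (measure M {\<omega> \<in> space M. (X \<omega>)\<^sup>2 \<le> a})" for a
    by (simp add: emeasure_eq_measure)
qed

lemma chi2_sum_distributed:
  assumes ind: "indep_vars (\<lambda>_. borel) z UNIV"
    and N: "\<And>j. distributed M lborel (z j) (\<lambda>x. ennreal (std_normal_density x))"
    and J: "finite J" "J \<noteq> {}"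
  shows "distributed M lborel (\<lambda>\<omega>. \<Sum>j\<in>J. (z j \<omega>)\<^sup>2) (\<lambda>x. ennreal (chi2_density (card J) x))"
  using J
proof (induction J rule: finite_ne_induct)
  case (singleton j)
  then show ?case using chi2_sq_distributed[OF N[of j]] by simp
next
  case (insert j J)
  have ind2: "indep_vars (\<lambda>_. borel) (\<lambda>i \<omega>. (z i \<omega>)\<^sup>2) UNIV"
    by (rule indep_vars_compose2[OF ind]) measurable
  have "indep_var borel (\<lambda>\<omega>. (z j \<omega>)\<^sup>2) borel (\<lambda>\<omega>. \<Sum>i\<in>J. (z i \<omega>)\<^sup>2)"
    using insert by (intro indep_vars_sum[where X = "\<lambda>i \<omega>. (z i \<omega>)\<^sup>2"] indep_vars_subset[OF ind2]) auto
  from distributed_convolution[OF this chi2_sq_distributed[OF N[of j]] insert.IH]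
  have "distributed M lborel (\<lambda>\<omega>. (z j \<omega>)\<^sup>2 + (\<Sum>i\<in>J. (z i \<omega>)\<^sup>2))
          (\<lambda>x. \<integral>\<^sup>+y. ennreal (chi2_density 1 (x - y)) * ennreal (chi2_density (card J) y) \<partial>lborel)" .
  moreover have "(\<lambda>x. \<integral>\<^sup>+y. ennreal (chi2_density 1 (x - y)) * ennreal (chi2_density (card J) y) \<partial>lborel)
      = (\<lambda>x. ennreal (chi2_density (card (insert j J)) x))"
    using insert by (auto simp: chi2_conv card_gt_0_iff)
  ultimately show ?case using insert by simp
qed

end


lemma chi2_scale:
  assumes w: "w < 1/2"
  shows "chi2_density k x * exp (w * x)
       = (1 - 2*w) powr (- (real k / 2 - 1)) * chi2_density k ((1 - 2*w) * x)"
proof (cases "x > 0")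
  case True
  define a where "a = 1 - 2*w"
  define p where "p = real k / 2 - 1"
  define C where "C = 2 powr (real k / 2) * Gamma (real k / 2)"
  have a: "a > 0" using w by (simp add: a_def)
  have ax: "a * x > 0" using a True by simp
  have l: "chi2_density k x = x powr p * exp (- x / 2) / C"
    using True unfolding chi2_density_def p_def C_def by simp
  have r: "chi2_density k (a * x) = (a * x) powr p * exp (- (a * x) / 2) / C"
    using ax unfolding chi2_density_def p_def C_def by simp
  have m: "(a * x) powr p = a powr p * x powr p"
    using a True by (simp add: powr_mult)
  have e: "exp (- (a * x) / 2) = exp (- x / 2) * exp (w * x)"
    unfolding a_def by (simp add: exp_add[symmetric] field_simps)
  have aa: "a powr (- p) * a powr p = 1"
    using a by (simp add: powr_add[symmetric])
  have "a powr (- p) * chi2_density k (a * x) = (a powr (- p) * a powr p) * (x powr p * exp (- x / 2) * exp (w * x) / C)"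
    unfolding r m e by (simp add: ac_simps)
  also have "\<dots> = chi2_density k x * exp (w * x)"
    unfolding aa l by simp
  finally show ?thesis unfolding a_def p_def by simp
next
  case False
  moreover have "(1 - 2*w) * x \<le> 0"
    using False w by (simp add: mult_nonneg_nonpos)
  ultimately show ?thesis by (simp add: chi2_nonpos)
qed



context prob_space
begin

lemma chi2_total:
  assumes Y: "distributed M lborel Y (\<lambda>x. ennreal (chi2_density k x))"
  shows "(\<integral>\<^sup>+x. ennreal (chi2_density k x) \<partial>lborel) = 1"
proof -
  have "emeasure M (Y -` UNIV \<inter> space M) = (\<integral>\<^sup>+x. ennreal (chi2_density k x) * indicator UNIV x \<partial>lborel)"
    by (rule distributed_emeasure[OF Y]) simp
  then show ?thesis by (simp add: emeasure_space_1)
qed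

lemma chi2_affine_int:
  assumes Y: "distributed M lborel Y (\<lambda>x. ennreal (chi2_density k x))"
    and a: "a > 0" and S[measurable]: "S \<in> sets borel"
  shows "(\<integral>\<^sup>+x. ennreal (chi2_density k (a * x) * indicator S (a * x)) \<partial>lborel)
       = ennreal (1 / a) * emeasure (density lborel (\<lambda>x. ennreal (chi2_density k x))) S"
proof -
  have "emeasure (density lborel (\<lambda>x. ennreal (chi2_density k x))) S
      = (\<integral>\<^sup>+x. ennreal (chi2_density k x * indicator S x) \<partial>lborel)"
    by (subst emeasure_density) (auto intro!: nn_integral_cong simp: indicator_def)
  also have "\<dots> = ennreal \<bar>a\<bar> * (\<integral>\<^sup>+x. ennreal (chi2_density k (0 + a * x) * indicator S (0 + a * x)) \<partial>lborel)"
    using a by (intro nn_integral_real_affine) auto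
  finally have *: "emeasure (density lborel (\<lambda>x. ennreal (chi2_density k x))) S
      = ennreal a * (\<integral>\<^sup>+x. ennreal (chi2_density k (a * x) * indicator S (a * x)) \<partial>lborel)"
    using a by simp
  have "ennreal (1 / a) * ennreal a = 1"
    using a by (simp add: ennreal_mult[symmetric])
  then show ?thesis unfolding * by (simp add: mult.assoc[symmetric])
qed

lemma powr_shift:
  fixes a :: real
  assumes a: "a > 0"
  shows "a powr (- (real k / 2 - 1)) / a = a powr (- (real k / 2))"
proof -
  have "a powr (- (real k / 2)) = a powr (- (real k / 2 - 1) - 1)"
    by (rule arg_cong[where f = "\<lambda>e. a powr e"]) simp
  also have "\<dots> = a powr (- (real k / 2 - 1)) / a powr 1" by (rule powr_diff)
  also have "a powr 1 = a" using a by simp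
  finally show ?thesis by simp
qed

lemma chi2_mgf:
  assumes Y: "distributed M lborel Y (\<lambda>x. ennreal (chi2_density k x))" and w: "w < 1/2"
  shows "(\<integral>\<^sup>+\<omega>. ennreal (exp (w * Y \<omega>)) \<partial>M) = ennreal ((1 - 2*w) powr (- (real k / 2)))"
proof -
  define a where "a = 1 - 2*w"
  define A where "A = a powr (- (real k / 2 - 1))"
  have a: "a > 0" using w by (simp add: a_def)
  have A0: "A \<ge> 0" unfolding A_def by simp
  have "(\<integral>\<^sup>+\<omega>. ennreal (exp (w * Y \<omega>)) \<partial>M)
      = (\<integral>\<^sup>+x. ennreal (chi2_density k x) * ennreal (exp (w * x)) \<partial>lborel)"
    by (rule distributed_nn_integral[OF Y, symmetric]) measurable
  also have "\<dots> = (\<integral>\<^sup>+x. ennreal A * ennreal (chi2_density k (a * x) * indicator UNIV (a * x)) \<partial>lborel)"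
  proof (rule nn_integral_cong)
    fix x :: real
    have "chi2_density k x * exp (w * x) = A * chi2_density k (a * x)"
      unfolding A_def a_def by (rule chi2_scale[OF w])
    then show "ennreal (chi2_density k x) * ennreal (exp (w * x)) = ennreal A * ennreal (chi2_density k (a * x) * indicator UNIV (a * x))"
      by (simp add: ennreal_mult[symmetric] chi2_nonneg A0)
  qed
  also have "\<dots> = ennreal A * (\<integral>\<^sup>+x. ennreal (chi2_density k (a * x) * indicator UNIV (a * x)) \<partial>lborel)"
    by (rule nn_integral_cmult) measurable
  also have "\<dots> = ennreal A * (ennreal (1 / a) * 1)"
    using chi2_affine_int[OF Y a, of UNIV] emeasure_density[of "\<lambda>x. ennreal (chi2_density k x)" lborel UNIV] chi2_total[OF Y]
    by simp
  also have "\<dots> = ennreal (A / a)"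
    using a A0 by (simp add: ennreal_mult[symmetric] divide_inverse)
  also have "A / a = a powr (- (real k / 2))"
    unfolding A_def by (rule powr_shift[OF a])
  finally show ?thesis unfolding a_def .
qed

lemma chi2_tail_exp:
  assumes Y: "distributed M lborel Y (\<lambda>x. ennreal (chi2_density k x))" and w: "w < 1/2"
  shows "(\<integral>\<^sup>+\<omega>. ennreal (indicator {c<..} (Y \<omega>) * exp (w * Y \<omega>)) \<partial>M)
       = ennreal ((1 - 2*w) powr (- (real k / 2)) * chi2_tail k ((1 - 2*w) * c))"
proof -
  define a where "a = 1 - 2*w"
  define A where "A = a powr (- (real k / 2 - 1))"
  define D where "D = density lborel (\<lambda>x. ennreal (chi2_density k x))"
  have a: "a > 0" using w by (simp add: a_def)
  have A0: "A \<ge> 0" unfolding A_def by simp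
  have "(\<integral>\<^sup>+\<omega>. ennreal (indicator {c<..} (Y \<omega>) * exp (w * Y \<omega>)) \<partial>M)
      = (\<integral>\<^sup>+x. ennreal (chi2_density k x) * ennreal (indicator {c<..} x * exp (w * x)) \<partial>lborel)"
    by (rule distributed_nn_integral[OF Y, symmetric]) measurable
  also have "\<dots> = (\<integral>\<^sup>+x. ennreal A * ennreal (chi2_density k (a * x) * indicator {a * c<..} (a * x)) \<partial>lborel)"
  proof (rule nn_integral_cong)
    fix x :: real
    have "chi2_density k x * exp (w * x) = A * chi2_density k (a * x)"
      unfolding A_def a_def by (rule chi2_scale[OF w])
    moreover have "indicator {c<..} x = (indicator {a * c<..} (a * x) :: real)"
      using a by (simp add: indicator_def)
    ultimately show "ennreal (chi2_density k x) * ennreal (indicator {c<..} x * exp (w * x)) = ennreal A * ennreal (chi2_density k (a * x) * indicator {a * c<..} (a * x))"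
      by (simp add: ennreal_mult[symmetric] chi2_nonneg A0 mult_ac)
  qed
  also have "\<dots> = ennreal A * (\<integral>\<^sup>+x. ennreal (chi2_density k (a * x) * indicator {a * c<..} (a * x)) \<partial>lborel)"
    by (rule nn_integral_cmult) measurable
  also have "\<dots> = ennreal A * (ennreal (1 / a) * emeasure D {a * c<..})"
    using chi2_affine_int[OF Y a, of "{a * c<..}"] by (simp add: D_def)
  also have "emeasure D {a * c<..} = ennreal (chi2_tail k (a * c))"
  proof -
    have "emeasure D {a * c<..} \<le> emeasure D UNIV"
      by (rule emeasure_mono) (auto simp: D_def)
    also have "emeasure D UNIV = 1"
      using chi2_total[OF Y] by (simp add: D_def emeasure_density)
    finally have "emeasure D {a * c<..} \<noteq> \<top>" by (auto simp: top_unique)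
    then show ?thesis unfolding chi2_tail_def D_def[symmetric]
      by (rule emeasure_eq_ennreal_measure)
  qed
  also have "ennreal A * (ennreal (1 / a) * ennreal (chi2_tail k (a * c))) = ennreal (A / a * chi2_tail k (a * c))"
    using a A0 by (simp add: ennreal_mult[symmetric] divide_inverse measure_nonneg chi2_tail_def)
  also have "A / a = a powr (- (real k / 2))"
    unfolding A_def by (rule powr_shift[OF a])
  finally show ?thesis unfolding a_def .
qed

end


lemma Q_meas:
  assumes "J \<subseteq> A"
  shows "(\<lambda>x. \<Sum>j\<in>J. (x j)\<^sup>2 :: real) \<in> borel_measurable (PiM A (\<lambda>_. borel))"
proof (rule borel_measurable_sum)
  fix j assume "j \<in> J"
  then have "j \<in> A" using assms by auto
  then have "(\<lambda>x. x j) \<in> measurable (PiM A (\<lambda>_. borel)) (borel :: real measure)"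
    by (rule measurable_component_singleton)
  from measurable_compose[OF this, of "\<lambda>y::real. y\<^sup>2" borel]
  show "(\<lambda>x. (x j)\<^sup>2 :: real) \<in> borel_measurable (PiM A (\<lambda>_. borel))" by simp
qed

lemma (in prob_space) indep2:
  fixes z :: "'i \<Rightarrow> 'a \<Rightarrow> real"
  assumes ind: "indep_vars (\<lambda>_. borel) z UNIV"
    and AB: "A \<inter> B = {}"
    and f: "f \<in> borel_measurable (PiM A (\<lambda>_. borel))" and g: "g \<in> borel_measurable (PiM B (\<lambda>_. borel))"
    and f0: "\<And>x. f x \<ge> 0" and g0: "\<And>x. g x \<ge> 0"
  shows "(\<integral>\<^sup>+\<omega>. ennreal (f (restrict (\<lambda>i. z i \<omega>) A) * g (restrict (\<lambda>i. z i \<omega>) B)) \<partial>M)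
       = (\<integral>\<^sup>+\<omega>. ennreal (f (restrict (\<lambda>i. z i \<omega>) A)) \<partial>M) * (\<integral>\<^sup>+\<omega>. ennreal (g (restrict (\<lambda>i. z i \<omega>) B)) \<partial>M)"
proof -
  define K where "K = (\<lambda>b::bool. if b then A else B)"
  define Y where "Y = (\<lambda>b::bool. if b then (\<lambda>x. ennreal (f x)) else (\<lambda>x. ennreal (g x)))"
  have "indep_vars (\<lambda>j. PiM (K j) (\<lambda>_. borel)) (\<lambda>j \<omega>. restrict (\<lambda>i. z i \<omega>) (K j)) UNIV"
    by (rule indep_vars_restrict[OF ind]) (auto simp: K_def disjoint_family_on_def AB Int_commute)
  then have "indep_vars (\<lambda>_. borel) (\<lambda>j \<omega>. Y j (restrict (\<lambda>i. z i \<omega>) (K j))) UNIV"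
    by (rule indep_vars_compose2) (auto simp: Y_def K_def f g measurable_compose[OF _ measurable_ennreal])
  then have "(\<integral>\<^sup>+\<omega>. (\<Prod>j\<in>UNIV. Y j (restrict (\<lambda>i. z i \<omega>) (K j))) \<partial>M)
      = (\<Prod>j\<in>UNIV. \<integral>\<^sup>+\<omega>. Y j (restrict (\<lambda>i. z i \<omega>) (K j)) \<partial>M)"
    by (intro indep_vars_nn_integral) auto
  then show ?thesis by (simp add: UNIV_bool Y_def K_def mult.commute ennreal_mult f0 g0)
qed



definition SS :: "(nat \<Rightarrow> 'a \<Rightarrow> real) \<Rightarrow> (nat \<Rightarrow> nat) \<Rightarrow> nat \<Rightarrow> 'a \<Rightarrow> real" where
  "SS z N i \<omega> = (\<Sum>j\<in>{1..N i}. (z j \<omega>)\<^sup>2)"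

definition Phi :: "'a measure \<Rightarrow> (nat \<Rightarrow> 'a \<Rightarrow> real) \<Rightarrow> (nat \<Rightarrow> nat) \<Rightarrow> (nat \<Rightarrow> real) \<Rightarrow> nat \<Rightarrow> real \<Rightarrow> ennreal" where
  "Phi M z N r n w = (\<integral>\<^sup>+\<omega>. ennreal ((\<Prod>i\<in>{1..n}. indicator {(r i)\<^sup>2<..} (SS z N i \<omega>)) * exp (w * SS z N n \<omega>)) \<partial>M)"

context prob_space
begin

lemma Phi_one:
  assumes ind: "indep_vars (\<lambda>_. borel) z UNIV"
    and Nd: "\<And>j. distributed M lborel (z j) (\<lambda>x. ennreal (std_normal_density x))"
    and N1: "N 1 > 0" and w: "w < 1/2"
  shows "Phi M z N r 1 w = ennreal ((1 - 2*w) powr (- (real (N 1) / 2)) * chi2_tail (N 1) ((1 - 2*w) * (r 1)\<^sup>2))"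
proof -
  have D: "distributed M lborel (SS z N 1) (\<lambda>x. ennreal (chi2_density (N 1) x))"
    using chi2_sum_distributed[OF ind Nd, of "{1..N 1}"] N1 by (simp add: SS_def[abs_def])
  have "Phi M z N r 1 w = (\<integral>\<^sup>+\<omega>. ennreal (indicator {(r 1)\<^sup>2<..} (SS z N 1 \<omega>) * exp (w * SS z N 1 \<omega>)) \<partial>M)"
    by (simp add: Phi_def)
  also have "\<dots> = ennreal ((1 - 2*w) powr (- (real (N 1) / 2)) * chi2_tail (N 1) ((1 - 2*w) * (r 1)\<^sup>2))"
    by (rule chi2_tail_exp[OF D w])
  finally show ?thesis .
qed

lemma Phi_step:
  assumes ind: "indep_vars (\<lambda>_. borel) z UNIV"
    and Nd: "\<And>j. distributed M lborel (z j) (\<lambda>x. ennreal (std_normal_density x))"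
    and mono: "\<And>i j. i \<le> j \<Longrightarrow> N i \<le> N j"
    and lt: "N p < N (Suc p)" and ww: "w \<le> w'" and w': "w' < 1/2"
  shows "Phi M z N r (Suc p) w \<le> ennreal (exp (- (w' - w) * (r (Suc p))\<^sup>2) * (1 - 2*w') powr (- (real (N (Suc p) - N p) / 2))) * Phi M z N r p w'"
proof -
  have Zm[measurable]: "\<And>j. z j \<in> borel_measurable M"
    using Nd by (simp add: distributed_def)
  define A where "A = {1..N p}"
  define B where "B = {Suc (N p)..N (Suc p)}"
  define Y where "Y \<omega> = (\<Sum>j\<in>B. (z j \<omega>)\<^sup>2)" for \<omega>
  define c where "c = exp (- (w' - w) * (r (Suc p))\<^sup>2)"
  define P where "P \<omega> = (\<Prod>i\<in>{1..p}. indicator {(r i)\<^sup>2<..} (SS z N i \<omega>) :: real)" for \<omega>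
  have AB: "A \<inter> B = {}" by (auto simp: A_def B_def)
  have ABu: "{1..N (Suc p)} = A \<union> B" using lt by (auto simp: A_def B_def)
  have split: "SS z N (Suc p) \<omega> = SS z N p \<omega> + Y \<omega>" for \<omega>
    unfolding SS_def Y_def ABu by (subst sum.union_disjoint) (auto simp: A_def B_def)
  have P0: "P \<omega> \<ge> 0" for \<omega> unfolding P_def by (intro prod_nonneg) auto
  have Psuc: "(\<Prod>i\<in>{1..Suc p}. indicator {(r i)\<^sup>2<..} (SS z N i \<omega>)) = P \<omega> * indicator {(r (Suc p))\<^sup>2<..} (SS z N (Suc p) \<omega>)" for \<omega>
    unfolding P_def by (simp add: atLeastAtMostSuc_conv mult.commute)
  have pw: "P \<omega> * indicator {(r (Suc p))\<^sup>2<..} (SS z N (Suc p) \<omega>) * exp (w * SS z N (Suc p) \<omega>)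
      \<le> c * ((P \<omega> * exp (w' * SS z N p \<omega>)) * exp (w' * Y \<omega>))" for \<omega>
  proof (cases "SS z N (Suc p) \<omega> > (r (Suc p))\<^sup>2")
    case True
    have "w * SS z N (Suc p) \<omega> \<le> - (w' - w) * (r (Suc p))\<^sup>2 + (w' * SS z N p \<omega> + w' * Y \<omega>)"
    proof -
      have "0 \<le> (w' - w) * (SS z N (Suc p) \<omega> - (r (Suc p))\<^sup>2)"
        using True ww by simp
      then show ?thesis unfolding split by (simp add: algebra_simps)
    qed
    then have "exp (w * SS z N (Suc p) \<omega>) \<le> c * (exp (w' * SS z N p \<omega>) * exp (w' * Y \<omega>))"
      unfolding c_def by (simp add: exp_add[symmetric])
    then have "P \<omega> * exp (w * SS z N (Suc p) \<omega>) \<le> P \<omega> * (c * (exp (w' * SS z N p \<omega>) * exp (w' * Y \<omega>)))"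
      by (rule mult_left_mono) (use P0 in auto)
    then show ?thesis using True by (simp add: ac_simps)
  next
    case False
    then show ?thesis using P0 by (simp add: c_def)
  qed
  have "Phi M z N r (Suc p) w \<le> (\<integral>\<^sup>+\<omega>. ennreal (c * ((P \<omega> * exp (w' * SS z N p \<omega>)) * exp (w' * Y \<omega>))) \<partial>M)"
    unfolding Phi_def Psuc by (intro nn_integral_mono ennreal_leI pw)
  also have "\<dots> = ennreal c * (\<integral>\<^sup>+\<omega>. ennreal ((P \<omega> * exp (w' * SS z N p \<omega>)) * exp (w' * Y \<omega>)) \<partial>M)"
  proof -
    have nn: "0 \<le> P \<omega> * exp (w' * SS z N p \<omega>) * exp (w' * Y \<omega>)" for \<omega> using P0[of \<omega>] by simp
    have Xm: "(\<lambda>\<omega>. ennreal (P \<omega> * exp (w' * SS z N p \<omega>) * exp (w' * Y \<omega>))) \<in> borel_measurable M"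
      unfolding P_def SS_def Y_def by measurable
    have "(\<integral>\<^sup>+\<omega>. ennreal (c * ((P \<omega> * exp (w' * SS z N p \<omega>)) * exp (w' * Y \<omega>))) \<partial>M)
       = (\<integral>\<^sup>+\<omega>. ennreal c * ennreal ((P \<omega> * exp (w' * SS z N p \<omega>)) * exp (w' * Y \<omega>)) \<partial>M)"
      by (intro nn_integral_cong) (simp add: ennreal_mult c_def nn)
    also have "\<dots> = ennreal c * (\<integral>\<^sup>+\<omega>. ennreal ((P \<omega> * exp (w' * SS z N p \<omega>)) * exp (w' * Y \<omega>)) \<partial>M)"
      by (rule nn_integral_cmult[OF Xm])
    finally show ?thesis .
  qed
  also have "(\<integral>\<^sup>+\<omega>. ennreal ((P \<omega> * exp (w' * SS z N p \<omega>)) * exp (w' * Y \<omega>)) \<partial>M)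
      = Phi M z N r p w' * ennreal ((1 - 2*w') powr (- (real (N (Suc p) - N p) / 2)))"
  proof -
    define F where "F x = (\<Prod>i\<in>{1..p}. indicator {(r i)\<^sup>2<..} (\<Sum>j\<in>{1..N i}. (x j)\<^sup>2)) * exp (w' * (\<Sum>j\<in>A. (x j)\<^sup>2))" for x :: "nat \<Rightarrow> real"
    define G where "G x = exp (w' * (\<Sum>j\<in>B. (x j)\<^sup>2))" for x :: "nat \<Rightarrow> real"
    have sub: "i \<in> {1..p} \<Longrightarrow> {1..N i} \<subseteq> A" for i using mono[of i p] by (auto simp: A_def)
    have FA: "F (restrict (\<lambda>i. z i \<omega>) A) = P \<omega> * exp (w' * SS z N p \<omega>)" for \<omega>
    proof -
      have e1: "(\<Sum>j\<in>{1..N i}. (restrict (\<lambda>i. z i \<omega>) A j)\<^sup>2) = SS z N i \<omega>" if "i \<in> {1..p}" for i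
        unfolding SS_def using sub[OF that] by (intro sum.cong) auto
      have e2: "(\<Sum>j\<in>A. (restrict (\<lambda>i. z i \<omega>) A j)\<^sup>2) = SS z N p \<omega>"
        unfolding SS_def A_def by (intro sum.cong) auto
      have e3: "(\<Prod>i\<in>{1..p}. indicator {(r i)\<^sup>2<..} (\<Sum>j\<in>{1..N i}. (restrict (\<lambda>i. z i \<omega>) A j)\<^sup>2)) = P \<omega>"
        unfolding P_def by (rule prod.cong) (simp_all only: e1)
      show ?thesis unfolding F_def e2 e3 ..
    qed
    have GB: "G (restrict (\<lambda>i. z i \<omega>) B) = exp (w' * Y \<omega>)" for \<omega>
      unfolding G_def Y_def by (simp cong: sum.cong)
    have Fm: "F \<in> borel_measurable (PiM A (\<lambda>_. borel))"
    proof -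
      have "(\<lambda>x. indicator {(r i)\<^sup>2<..} (\<Sum>j\<in>{1..N i}. (x j)\<^sup>2) :: real) \<in> borel_measurable (PiM A (\<lambda>_. borel))"
        if "i \<in> {1..p}" for i
        by (rule measurable_compose[OF Q_meas[OF sub[OF that]]]) simp
      then have 1: "(\<lambda>x. \<Prod>i\<in>{1..p}. indicator {(r i)\<^sup>2<..} (\<Sum>j\<in>{1..N i}. (x j)\<^sup>2) :: real) \<in> borel_measurable (PiM A (\<lambda>_. borel))"
        by (rule borel_measurable_prod)
      have 2: "(\<lambda>x. exp (w' * (\<Sum>j\<in>A. (x j)\<^sup>2))) \<in> borel_measurable (PiM A (\<lambda>_. borel))"
        by (rule measurable_compose[OF Q_meas[of A A]]) auto
      show ?thesis unfolding F_def[abs_def] using 1 2 by (rule borel_measurable_times)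
    qed
    have Gm: "G \<in> borel_measurable (PiM B (\<lambda>_. borel))"
      unfolding G_def[abs_def] by (rule measurable_compose[OF Q_meas[of B B]]) auto
    have "(\<integral>\<^sup>+\<omega>. ennreal ((P \<omega> * exp (w' * SS z N p \<omega>)) * exp (w' * Y \<omega>)) \<partial>M)
        = (\<integral>\<^sup>+\<omega>. ennreal (F (restrict (\<lambda>i. z i \<omega>) A) * G (restrict (\<lambda>i. z i \<omega>) B)) \<partial>M)"
      by (simp add: FA GB)
    also have "\<dots> = (\<integral>\<^sup>+\<omega>. ennreal (F (restrict (\<lambda>i. z i \<omega>) A)) \<partial>M) * (\<integral>\<^sup>+\<omega>. ennreal (G (restrict (\<lambda>i. z i \<omega>) B)) \<partial>M)"
      by (rule indep2[OF ind AB Fm Gm]) (auto simp: F_def G_def intro!: mult_nonneg_nonneg prod_nonneg)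
    also have "(\<integral>\<^sup>+\<omega>. ennreal (F (restrict (\<lambda>i. z i \<omega>) A)) \<partial>M) = Phi M z N r p w'"
      unfolding FA Phi_def P_def ..
    also have "(\<integral>\<^sup>+\<omega>. ennreal (G (restrict (\<lambda>i. z i \<omega>) B)) \<partial>M) = ennreal ((1 - 2*w') powr (- (real (N (Suc p) - N p) / 2)))"
    proof -
      have "distributed M lborel Y (\<lambda>x. ennreal (chi2_density (card B) x))"
        using chi2_sum_distributed[OF ind Nd, of B] lt by (simp add: Y_def[abs_def] B_def)
      from chi2_mgf[OF this w'] show ?thesis unfolding GB by (simp add: B_def)
    qed
    finally show ?thesis .
  qed
  finally show ?thesis
    by (simp add: c_def ennreal_mult mult_ac)
qed

end


lemma hh_pos:
  assumes U: "\<forall>i\<in>{1..m}. 0 \<le> u i \<and> u i < 1/2" and k: "k \<le> m"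
  shows "0 < 1 - 2 * hh u k \<and> 1 - 2 * hh u k \<le> 1"
  using k
proof (induction k)
  case 0
  then show ?case by simp
next
  case (Suc k)
  then have IH: "0 < 1 - 2 * hh u k" "1 - 2 * hh u k \<le> 1" by auto
  have uk: "0 \<le> u (Suc k)" "u (Suc k) < 1/2" using U Suc.prems by auto
  have eq: "1 - 2 * hh u (Suc k) = (1 - 2 * hh u k) * (1 - 2 * u (Suc k))"
    by (simp add: algebra_simps)
  have "0 < (1 - 2 * hh u k) * (1 - 2 * u (Suc k))" using IH uk by (intro mult_pos_pos) auto
  moreover have "(1 - 2 * hh u k) * (1 - 2 * u (Suc k)) \<le> 1"
    using IH uk by (intro mult_le_one) auto
  ultimately show ?case unfolding eq by simp
qed

lemma hh_mono:
  assumes U: "\<forall>i\<in>{1..m}. 0 \<le> u i \<and> u i < 1/2" and k: "Suc k \<le> m"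
  shows "hh u k \<le> hh u (Suc k)"
proof -
  have "0 < 1 - 2 * hh u k" using hh_pos[OF U, of k] k by simp
  moreover have "0 \<le> u (Suc k)" using U k by auto
  ultimately show ?thesis by simp
qed

lemma gg_nonneg: "0 \<le> gg m I r u k"
  by (induction k) auto

theorem theorem3:
  fixes M :: "'a measure" and z :: "nat \<Rightarrow> 'a \<Rightarrow> real"
    and m :: nat and I :: "nat \<Rightarrow> nat" and r :: "nat \<Rightarrow> real"
  assumes "prob_space M"
    and "prob_space.indep_vars M (\<lambda>_. borel) z UNIV"
    and "\<And>j. distributed M lborel (z j) std_normal_density"
    and "m \<ge> 2"
    and "\<And>i. i \<in> {1..m} \<Longrightarrow> I i > 0"
    and "\<And>i. i \<in> {1..m} \<Longrightarrow> r i > 0"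
  shows "measure M {\<omega> \<in> space M. \<forall>i\<in>{1..m}.
            (\<Sum>j\<in>{1..(\<Sum>k\<in>{1..i}. I k)}. (z j \<omega>)\<^sup>2) > (r i)\<^sup>2}
         \<le> (INF u \<in> {u :: nat \<Rightarrow> real. \<forall>i\<in>{1..m}. 0 \<le> u i \<and> u i < 1/2}.
              gg m I r u (m - 1) * chi2_tail (I 1) ((1 - 2 * hh u (m - 1)) * (r 1)\<^sup>2)
              / (1 - 2 * hh u (m - 1)) powr (real (I 1) / 2))"
proof -
  interpret prob_space M by (rule assms(1))
  have ind: "indep_vars (\<lambda>_. borel) z UNIV" by (rule assms(2))
  have Nd: "\<And>j. distributed M lborel (z j) (\<lambda>x. ennreal (std_normal_density x))"
    using assms(3) by simp
  have Zm[measurable]: "\<And>j. z j \<in> borel_measurable M"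
    using Nd by (simp add: distributed_def)
  define N where "N i = (\<Sum>k\<in>{1..i}. I k)" for i
  have mono: "\<And>i j. i \<le> j \<Longrightarrow> N i \<le> N j" unfolding N_def by (intro sum_mono2) auto
  have Nsuc: "N (Suc p) = N p + I (Suc p)" for p unfolding N_def by simp
  have N1: "N 1 = I 1" unfolding N_def by simp
  define E where "E = {\<omega> \<in> space M. \<forall>i\<in>{1..m}. (\<Sum>j\<in>{1..(\<Sum>k\<in>{1..i}. I k)}. (z j \<omega>)\<^sup>2) > (r i)\<^sup>2}"
  have Es: "E \<in> sets M" unfolding E_def by measurable
  have EPhi: "emeasure M E = Phi M z N r m 0"
  proof -
    have "emeasure M E = (\<integral>\<^sup>+\<omega>. indicator E \<omega> \<partial>M)" using Es by simp
    also have "\<dots> = Phi M z N r m 0"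
      unfolding Phi_def
    proof (rule nn_integral_cong)
      fix \<omega> assume w: "\<omega> \<in> space M"
      show "indicator E \<omega> = ennreal ((\<Prod>i\<in>{1..m}. indicator {(r i)\<^sup>2<..} (SS z N i \<omega>)) * exp (0 * SS z N m \<omega>))"
      proof (cases "\<omega> \<in> E")
        case True
        then have "\<forall>i\<in>{1..m}. SS z N i \<omega> > (r i)\<^sup>2" by (simp add: E_def SS_def N_def)
        then have "(\<Prod>i\<in>{1..m}. indicator {(r i)\<^sup>2<..} (SS z N i \<omega>) :: real) = (\<Prod>i\<in>{1..m}. 1)"
          by (intro prod.cong) auto
        then show ?thesis using True by simp
      next
        case False
        then obtain i where i: "i \<in> {1..m}" "\<not> SS z N i \<omega> > (r i)\<^sup>2"
          using w by (auto simp: E_def SS_def N_def)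
        then have pz: "(\<Prod>i\<in>{1..m}. indicator {(r i)\<^sup>2<..} (SS z N i \<omega>) :: real) = 0"
          by (intro prod_zero) (use i in \<open>auto intro!: bexI[of _ i]\<close>)
        show ?thesis unfolding pz using False by simp
      qed
    qed
    finally show ?thesis .
  qed
  define U where "U = {u :: nat \<Rightarrow> real. \<forall>i\<in>{1..m}. 0 \<le> u i \<and> u i < 1/2}"
  have "measure M E \<le> gg m I r u (m - 1) * chi2_tail (I 1) ((1 - 2 * hh u (m - 1)) * (r 1)\<^sup>2)
              / (1 - 2 * hh u (m - 1)) powr (real (I 1) / 2)" if u: "u \<in> U" for u
  proof -
    have Uu: "\<forall>i\<in>{1..m}. 0 \<le> u i \<and> u i < 1/2" using u by (simp add: U_def)
    have chain: "k \<le> m - 1 \<Longrightarrow> Phi M z N r m 0 \<le> ennreal (gg m I r u k) * Phi M z N r (m - k) (hh u k)" for k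
    proof (induction k)
      case 0
      then show ?case by simp
    next
      case (Suc k)
      define p where "p = m - Suc k"
      have mk: "m - k = Suc p" using Suc.prems assms(4) by (simp add: p_def)
      have Ip: "I (Suc p) > 0" using assms(5)[of "Suc p"] Suc.prems by (simp add: p_def)
      have lt: "N p < N (Suc p)" using Ip by (simp add: Nsuc)
      have sk: "Suc k \<le> m" using Suc.prems by simp
      have ww: "hh u k \<le> hh u (Suc k)" by (rule hh_mono[OF Uu sk])
      have w': "hh u (Suc k) < 1/2" using hh_pos[OF Uu sk] by linarith
      have step: "Phi M z N r (Suc p) (hh u k) \<le> ennreal (exp (- (hh u (Suc k) - hh u k) * (r (Suc p))\<^sup>2) * (1 - 2 * hh u (Suc k)) powr (- (real (N (Suc p) - N p) / 2))) * Phi M z N r p (hh u (Suc k))"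
        by (rule Phi_step[OF ind Nd mono lt ww w'])
      have ggs: "gg m I r u (Suc k) = gg m I r u k * (exp (- (hh u (Suc k) - hh u k) * (r (Suc p))\<^sup>2) * (1 - 2 * hh u (Suc k)) powr (- (real (N (Suc p) - N p) / 2)))"
        using mk by (simp add: Nsuc)
      have "Phi M z N r m 0 \<le> ennreal (gg m I r u k) * Phi M z N r (m - k) (hh u k)"
        using Suc by simp
      also have "\<dots> \<le> ennreal (gg m I r u k) * (ennreal (exp (- (hh u (Suc k) - hh u k) * (r (Suc p))\<^sup>2) * (1 - 2 * hh u (Suc k)) powr (- (real (N (Suc p) - N p) / 2))) * Phi M z N r p (hh u (Suc k)))"
        unfolding mk by (rule mult_left_mono[OF step]) simp
      also have "\<dots> = ennreal (gg m I r u (Suc k)) * Phi M z N r (m - Suc k) (hh u (Suc k))"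
        unfolding ggs p_def by (simp add: ennreal_mult gg_nonneg mult.assoc)
      finally show ?case .
    qed
    have m1: "m - (m - 1) = 1" using assms(4) by simp
    have h2: "0 < 1 - 2 * hh u (m - 1)" using hh_pos[OF Uu, of "m - 1"] by simp
    have h: "hh u (m - 1) < 1/2" "0 < 1 - 2 * hh u (m - 1)" using h2 by linarith+
    have I1: "N 1 > 0" unfolding N1 using assms(5)[of 1] assms(4) by simp
    define T where "T = gg m I r u (m - 1) * ((1 - 2 * hh u (m - 1)) powr (- (real (N 1) / 2)) * chi2_tail (N 1) ((1 - 2 * hh u (m - 1)) * (r 1)\<^sup>2))"
    have T0: "T \<ge> 0" unfolding T_def chi2_tail_def by (intro mult_nonneg_nonneg gg_nonneg measure_nonneg) simp
    have "ennreal (measure M E) \<le> ennreal T"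
    proof -
      have "ennreal (measure M E) = Phi M z N r m 0" using EPhi by (simp add: emeasure_eq_measure)
      also have "\<dots> \<le> ennreal (gg m I r u (m - 1)) * Phi M z N r 1 (hh u (m - 1))"
        using chain[of "m - 1"] unfolding m1 by simp
      also have "\<dots> = ennreal T"
        unfolding Phi_one[where z=z and N=N and r=r, OF ind Nd I1 h(1)] T_def
        by (simp add: ennreal_mult gg_nonneg chi2_tail_def)
      finally show ?thesis .
    qed
    then have "measure M E \<le> T" using T0 by simp
    also have "T = gg m I r u (m - 1) * chi2_tail (I 1) ((1 - 2 * hh u (m - 1)) * (r 1)\<^sup>2)
              / (1 - 2 * hh u (m - 1)) powr (real (I 1) / 2)"
      unfolding T_def N1 using h(2) by (simp add: powr_minus_divide)
    finally show ?thesis .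
  qed
  moreover have "(\<lambda>_. 0) \<in> U" unfolding U_def by simp
  ultimately show ?thesis unfolding E_def[symmetric] U_def[symmetric]
    by (intro cINF_greatest) blast+
qed


end
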